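(* Let $k\ge2$ and let $(a(n))_{n\ge0}$ and $(b(n))_{n\ge0}$ be $k$-automatic sequences. Then the sequence $(c(n))_{n\ge0}$ defined by $c(n)=1$ if $a(nk^\lambda+s)=b(nk^\lambda+s)$ for all integers $\lambda\ge0$ and $0\le s<k^\lambda$, and $c(n)=0$ otherwise, is $k$-automatic.
   Context: A sequence $u$ on a finite alphabet is $k$-automatic if there is a finite set of states $Q$, a map $\delta:Q\times\{0,\dots,k-1\}\to Q$ extended to words letter by letter, an initial state $q_0$ and an output map $\tau$ such that $u(n)=\tau(\delta(q_0,(n)_k))$ for all $n\ge0$, where $(n)_k$ is the base-$k$ expansion of $n$ (most significant digit first; $(0)_k$ is the empty word). *)

theory Defs
  imports Main
begin

fun base_digits :: "nat \<Rightarrow> nat \<Rightarrow> nat list" where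
  "base_digits k n = (if k < 2 \<or> n = 0 then [] else base_digits k (n div k) @ [n mod k])"

declare base_digits.simps [simp del]

text \<open>The output alphabet is
  automatically finite, being the image of the finite set Q under tau.\<close>
definition k_automatic :: "nat \<Rightarrow> (nat \<Rightarrow> 'a) \<Rightarrow> bool" where
  "k_automatic k u \<longleftrightarrow>
     (\<exists>(Q::nat set) (delta::nat \<Rightarrow> nat \<Rightarrow> nat) q0 (tau::nat \<Rightarrow> 'a).
        finite Q \<and> q0 \<in> Q \<and> (\<forall>q\<in>Q. \<forall>d<k. delta q d \<in> Q) \<and>
        (\<forall>n. u n = tau (foldl delta q0 (base_digits k n))))"

end

theory Submission
  imports Defs "HOL-Library.Nat_Bijection"
begin

definition valw :: "nat \<Rightarrow> nat list \<Rightarrow> nat" where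
  "valw k w = foldl (\<lambda>acc d. acc * k + d) 0 w"

lemma valw_snoc: "valw k (w @ [d]) = valw k w * k + d"
  by (simp add: valw_def)

lemma valw_bound: "k \<ge> 2 \<Longrightarrow> set w \<subseteq> {..<k} \<Longrightarrow> valw k w < k ^ length w"
proof (induction w rule: rev_induct)
  case Nil then show ?case by (simp add: valw_def)
next
  case (snoc d w)
  then have h: "valw k w < k ^ length w" "d < k" by auto
  then have "valw k w + 1 \<le> k ^ length w" by simp
  then have "(valw k w + 1) * k \<le> k ^ length w * k" by (rule mult_right_mono) simp
  then show ?case using h by (simp add: valw_snoc algebra_simps)
qed

lemma valw_surj: "k \<ge> 2 \<Longrightarrow> s < k ^ l \<Longrightarrow> \<exists>w. length w = l \<and> set w \<subseteq> {..<k} \<and> valw k w = s"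
proof (induction l arbitrary: s)
  case 0 then show ?case by (rule_tac x="[]" in exI) (simp add: valw_def)
next
  case (Suc l)
  have "s div k < k ^ l" using Suc.prems
    by (simp add: less_mult_imp_div_less mult.commute)
  then obtain w where w: "length w = l" "set w \<subseteq> {..<k}" "valw k w = s div k"
    using Suc by blast
  show ?case
    apply (rule_tac x="w @ [s mod k]" in exI)
    using w Suc.prems by (simp add: valw_snoc)
qed

lemma base_digits_step: "k \<ge> 2 \<Longrightarrow> m > 0 \<Longrightarrow> d < k \<Longrightarrow>
   base_digits k (m * k + d) = base_digits k m @ [d]"
  by (subst base_digits.simps) simp

lemma base_digits_append: "k \<ge> 2 \<Longrightarrow> n > 0 \<Longrightarrow> set w \<subseteq> {..<k} \<Longrightarrow>
   base_digits k (n * k ^ length w + valw k w) = base_digits k n @ w"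
proof (induction w rule: rev_induct)
  case Nil then show ?case by (simp add: valw_def)
next
  case (snoc d w)
  have "n * k ^ length w > 0" using snoc.prems by simp
  then have pos: "n * k ^ length w + valw k w > 0" by simp
  have "n * k ^ length (w @ [d]) + valw k (w @ [d]) = (n * k ^ length w + valw k w) * k + d"
    by (simp add: valw_snoc algebra_simps)
  then show ?case using snoc base_digits_step[OF snoc.prems(1) pos, of d] by simp
qed

definition enc3 :: "nat \<Rightarrow> nat \<Rightarrow> nat \<Rightarrow> nat" where
  "enc3 f x y = prod_encode (f, prod_encode (x, y))"

lemma fold_prod:
  "foldl (\<lambda>q d. enc3 1 (da (fst (prod_decode (snd (prod_decode q)))) d)
                        (db (snd (prod_decode (snd (prod_decode q)))) d)) (enc3 f x y) ds
   = (if ds = [] then enc3 f x y else enc3 1 (foldl da x ds) (foldl db y ds))"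
proof (induction ds arbitrary: f x y)
  case Nil then show ?case by simp
next
  case (Cons d ds)
  show ?case using Cons[of 1 "da x d" "db y d"] by (simp add: enc3_def)
qed

theorem lemma4p2:
  fixes k :: nat and a b :: "nat \<Rightarrow> 'a" and c :: "nat \<Rightarrow> nat"
  assumes "k \<ge> 2"
    and "k_automatic k a" and "k_automatic k b"
    and "\<And>n. c n = (if (\<forall>l::nat. \<forall>s::nat. s < k ^ l \<longrightarrow>
                              a (n * k ^ l + s) = b (n * k ^ l + s)) then 1 else 0)"
  shows "k_automatic k c"
proof -
  obtain Qa da qa and ta :: "nat \<Rightarrow> 'a" where A: "finite Qa" "qa \<in> Qa" "\<forall>q\<in>Qa. \<forall>d<k. da q d \<in> Qa"
      "\<forall>n. a n = ta (foldl da qa (base_digits k n))"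
    using assms(2) unfolding k_automatic_def by blast
  obtain Qb db qb and tb :: "nat \<Rightarrow> 'a" where B: "finite Qb" "qb \<in> Qb" "\<forall>q\<in>Qb. \<forall>d<k. db q d \<in> Qb"
      "\<forall>n. b n = tb (foldl db qb (base_digits k n))"
    using assms(3) unfolding k_automatic_def by blast
  define good where "good x y \<longleftrightarrow> (\<forall>w. set w \<subseteq> {..<k} \<longrightarrow> ta (foldl da x w) = tb (foldl db y w))" for x y
  define delta where "delta q d = enc3 1 (da (fst (prod_decode (snd (prod_decode q)))) d)
                        (db (snd (prod_decode (snd (prod_decode q)))) d)" for q d
  define tau where "tau q = (if fst (prod_decode q) = 0 then c 0 else
       if good (fst (prod_decode (snd (prod_decode q)))) (snd (prod_decode (snd (prod_decode q))))
       then 1 else 0)" for q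
  define Q where "Q = (\<lambda>(f, x, y). enc3 f x y) ` ({0, 1::nat} \<times> Qa \<times> Qb)"
  have fold: "foldl delta (enc3 f x y) ds
     = (if ds = [] then enc3 f x y else enc3 1 (foldl da x ds) (foldl db y ds))" for f x y ds
    unfolding delta_def by (rule fold_prod)
  have "finite Q" unfolding Q_def using A(1) B(1) by (intro finite_imageI finite_cartesian_product) auto
  moreover have "enc3 0 qa qb \<in> Q" unfolding Q_def using A(2) B(2)
    by (intro image_eqI[where x="(0, qa, qb)"]) auto
  moreover have "\<forall>q\<in>Q. \<forall>d<k. delta q d \<in> Q"
  proof (intro ballI allI impI)
    fix q d assume q: "q \<in> Q" and d: "d < k"
    then obtain f x y where fxy: "q = enc3 f x y" "x \<in> Qa" "y \<in> Qb" unfolding Q_def by auto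
    then have "delta q d = enc3 1 (da x d) (db y d)" by (simp add: delta_def enc3_def)
    then show "delta q d \<in> Q" unfolding Q_def using A(3) B(3) d fxy
      by (intro image_eqI[where x="(1, da x d, db y d)"]) auto
  qed
  moreover have "\<forall>n. c n = tau (foldl delta (enc3 0 qa qb) (base_digits k n))"
  proof
    fix n
    show "c n = tau (foldl delta (enc3 0 qa qb) (base_digits k n))"
    proof (cases "n = 0")
      case True
      have "base_digits k n = []" using True by (subst base_digits.simps) simp
      then show ?thesis using True by (simp add: tau_def enc3_def)
    next
      case False
      define ds where "ds = base_digits k n"
      have ne: "ds \<noteq> []" unfolding ds_def using False assms(1)
        by (subst base_digits.simps) simp
      have st: "tau (foldl delta (enc3 0 qa qb) ds) = (if good (foldl da qa ds) (foldl db qb ds) then 1 else 0)"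
      proof -
        have "foldl delta (enc3 0 qa qb) ds = enc3 1 (foldl da qa ds) (foldl db qb ds)"
          using ne fold[of 0 qa qb ds] by simp
        then show ?thesis by (simp add: tau_def enc3_def)
      qed
      have eq: "good (foldl da qa ds) (foldl db qb ds) \<longleftrightarrow>
          (\<forall>l s. s < k ^ l \<longrightarrow> a (n * k ^ l + s) = b (n * k ^ l + s))"
      proof
        assume g: "good (foldl da qa ds) (foldl db qb ds)"
        show "\<forall>l s. s < k ^ l \<longrightarrow> a (n * k ^ l + s) = b (n * k ^ l + s)"
        proof (intro allI impI)
          fix l s assume "s < k ^ l"
          then obtain w where w: "length w = l" "set w \<subseteq> {..<k}" "valw k w = s"
            using valw_surj assms(1) by blast
          have "base_digits k (n * k ^ l + s) = ds @ w"
            using base_digits_append[OF assms(1) _ w(2), of n] False w unfolding ds_def by simp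
          then show "a (n * k ^ l + s) = b (n * k ^ l + s)"
            using g w(2) A(4) B(4) unfolding good_def by simp
        qed
      next
        assume h: "\<forall>l s. s < k ^ l \<longrightarrow> a (n * k ^ l + s) = b (n * k ^ l + s)"
        show "good (foldl da qa ds) (foldl db qb ds)" unfolding good_def
        proof (intro allI impI)
          fix w :: "nat list" assume w: "set w \<subseteq> {..<k}"
          have "valw k w < k ^ length w" using valw_bound[OF assms(1) w] .
          with h have e: "a (n * k ^ length w + valw k w) = b (n * k ^ length w + valw k w)" by blast
          have "base_digits k (n * k ^ length w + valw k w) = ds @ w"
            using base_digits_append[OF assms(1) _ w, of n] False unfolding ds_def by simp
          then show "ta (foldl da (foldl da qa ds) w) = tb (foldl db (foldl db qb ds) w)"
            using e A(4) B(4) by simp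
        qed
      qed
      show ?thesis using st eq assms(4)[of n] unfolding ds_def by simp
    qed
  qed
  ultimately show ?thesis unfolding k_automatic_def by blast
qed

end
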